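(* For infinitely many positive integers $n$ there is a directed tree with $n$ vertices in which every directed path has length at most one (i.e. every vertex is a source or a sink) and whose span is greater than $\log_2 n/(2\log_2\log_2 n)$.
   Context: A directed tree is a DAG (directed acyclic graph) whose underlying undirected graph is a tree. A source (sink) is a vertex with no incoming (outgoing) edge. An upward-planar layered drawing of a DAG $G$ maps each vertex $v$ to a point in the plane whose y-coordinate $y(v)$ is an integer, and each edge $(u,v)$ (directed from tail $u$ to head $v$) to a strictly y-monotone curve going upward from $u$ to $v$ (so $y(u)<y(v)$), such that no two edges intersect except at common endpoints. The span of an edge $(u,v)$ in such a drawing $\Gamma$ is $y(v)-y(u)$; the span of $\Gamma$ is the maximum span of its edges; the span of an upward-planar DAG is the minimum span over all its upward-planar layered drawings. The length of a directed path is its number of edges. *)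

theory Defs
  imports "HOL-Analysis.Analysis"
begin

text \<open>It is a directed tree if its underlying undirected graph is a tree: no loops, no pair of
  antiparallel edges, connected, and with exactly |V| - 1 (undirected) edges.\<close>

definition directed_tree :: "'v set \<Rightarrow> ('v \<times> 'v) set \<Rightarrow> bool" where
  "directed_tree V E \<longleftrightarrow>
     finite V \<and> V \<noteq> {} \<and> E \<subseteq> V \<times> V \<and>
     (\<forall>(u,v)\<in>E. u \<noteq> v \<and> (v,u) \<notin> E) \<and>
     (\<forall>u\<in>V. \<forall>v\<in>V. (u,v) \<in> (E \<union> E\<inverse>)\<^sup>*) \<and>
     card E = card V - 1"

definition all_paths_short :: "('v \<times> 'v) set \<Rightarrow> bool" where
  "all_paths_short E \<longleftrightarrow> (\<forall>u v w. (u,v) \<in> E \<longrightarrow> (v,w) \<notin> E)"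

definition vpt :: "('v \<Rightarrow> real) \<Rightarrow> ('v \<Rightarrow> int) \<Rightarrow> 'v \<Rightarrow> real \<times> real" where
  "vpt x y v = (x v, real_of_int (y v))"

definition upward_planar_layered_drawing ::
  "'v set \<Rightarrow> ('v \<times> 'v) set \<Rightarrow> ('v \<Rightarrow> real) \<Rightarrow> ('v \<Rightarrow> int)
     \<Rightarrow> ('v \<times> 'v \<Rightarrow> real \<Rightarrow> real \<times> real) \<Rightarrow> bool" where
  "upward_planar_layered_drawing V E x y c \<longleftrightarrow>
     inj_on (vpt x y) V \<and>
     (\<forall>(u,v)\<in>E. path (c (u,v)) \<and> pathstart (c (u,v)) = vpt x y u \<and>
                 pathfinish (c (u,v)) = vpt x y v \<and>
                 strict_mono_on {0..1} (\<lambda>t. snd (c (u,v) t)) \<and>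
                 path_image (c (u,v)) \<inter> vpt x y ` V \<subseteq> {vpt x y u, vpt x y v}) \<and>
     (\<forall>e\<in>E. \<forall>e'\<in>E. e \<noteq> e' \<longrightarrow>
        path_image (c e) \<inter> path_image (c e') \<subseteq>
          vpt x y ` ({fst e, snd e} \<inter> {fst e', snd e'}))"

definition drawing_span :: "('v \<times> 'v) set \<Rightarrow> ('v \<Rightarrow> int) \<Rightarrow> nat" where
  "drawing_span E y = Max (insert 0 ((\<lambda>(u,v). nat (y v - y u)) ` E))"

definition upward_span :: "'v set \<Rightarrow> ('v \<times> 'v) set \<Rightarrow> nat" where
  "upward_span V E = (LEAST s. \<exists>x y c. upward_planar_layered_drawing V E x y c \<and>
                                     drawing_span E y = s)"

end

theory Submission
  imports Defs
begin

lemma trap_comb: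
  fixes y :: "'v \<Rightarrow> int" and lt :: "'v \<Rightarrow> 'v \<Rightarrow> bool"
  shows "\<And>N K. card K = n \<Longrightarrow> finite N \<Longrightarrow> finite K \<Longrightarrow> (\<forall>a\<in>N. \<forall>b\<in>N. a \<noteq> b \<longrightarrow> lt a b \<or> lt b a)
    \<Longrightarrow> y ` N \<subseteq> K \<Longrightarrow> 2 * card K + 1 \<le> card N
    \<Longrightarrow> \<exists>a\<in>N. \<exists>x\<in>N. \<exists>c\<in>N. lt a x \<and> lt x c \<and> y x \<le> y a \<and> y x \<le> y c"
proof (induction n rule: less_induct)
  case (less n N K)
  have Nne: "N \<noteq> {}" using less.prems by auto
  define m where "m = Min (y ` N)"
  have mK: "m \<in> K" using less.prems Nne unfolding m_def
    by (meson Min_in finite_imageI image_is_empty subsetD)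
  have mmin: "\<And>v. v \<in> N \<Longrightarrow> m \<le> y v" unfolding m_def using less.prems by simp
  define M where "M = {v\<in>N. y v = m}"
  show ?case
  proof (cases "\<exists>x\<in>M. (\<exists>a\<in>N. lt a x) \<and> (\<exists>c\<in>N. lt x c)")
    case True
    then obtain x a c where "x \<in> M" "a \<in> N" "c \<in> N" "lt a x" "lt x c" by blast
    then show ?thesis using mmin unfolding M_def by fastforce
  next
    case False
    define F where "F = {x\<in>N. \<forall>a\<in>N. \<not> lt a x}"
    define G where "G = {x\<in>N. \<forall>c\<in>N. \<not> lt x c}"
    have "M \<subseteq> F \<union> G" using False unfolding M_def F_def G_def by auto
    moreover have fF: "finite F" "finite G" using less.prems unfolding F_def G_def by auto
    moreover have "card F \<le> 1"
    proof -
      have "\<forall>a1\<in>F. \<forall>a2\<in>F. a1 = a2" using less.prems(4) unfolding F_def by blast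
      then show ?thesis using card_le_Suc0_iff_eq[OF fF(1)] by simp
    qed
    moreover have "card G \<le> 1"
    proof -
      have "\<forall>a1\<in>G. \<forall>a2\<in>G. a1 = a2" using less.prems(4) unfolding G_def by blast
      then show ?thesis using card_le_Suc0_iff_eq[OF fF(2)] by simp
    qed
    ultimately have cM: "card M \<le> 2"
    proof -
      assume a: "M \<subseteq> F \<union> G" "finite F" "finite G" "card F \<le> 1" "card G \<le> 1"
      have "card M \<le> card (F \<union> G)" using a by (intro card_mono) auto
      also have "\<dots> \<le> card F + card G" by (rule card_Un_le)
      finally show ?thesis using a by linarith
    qed
    have fM: "finite M" using less.prems unfolding M_def by auto
    define N' where "N' = N - M"
    define K' where "K' = K - {m}"
    have cK': "card K' = n - 1" "n \<ge> 1" using mK less.prems unfolding K'_def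
      by (auto simp: card_Diff_singleton Suc_leI card_gt_0_iff intro!: Suc_leI)
    have "card N' \<ge> card N - 2" unfolding N'_def
      using card_Diff_subset[OF fM] cM M_def by (simp add: diff_le_mono2 le_diff_iff')
    then have c1: "2 * card K' + 1 \<le> card N'" using cK' less.prems by linarith
    have "y ` N' \<subseteq> K'" using less.prems unfolding N'_def K'_def M_def by auto
    then have "\<exists>a\<in>N'. \<exists>x\<in>N'. \<exists>c\<in>N'. lt a x \<and> lt x c \<and> y x \<le> y a \<and> y x \<le> y c"
      using less.IH[of "n - 1" K' N'] cK' c1 less.prems unfolding N'_def K'_def by auto
    then show ?thesis unfolding N'_def by blast
  qed
qed

definition goodS :: "'v set \<Rightarrow> ('v \<times> 'v) set \<Rightarrow> ('v \<Rightarrow> real) \<Rightarrow> ('v \<Rightarrow> int) \<Rightarrow> ('v \<Rightarrow> 'v \<Rightarrow> real \<Rightarrow> real) \<Rightarrow> bool" where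
"goodS V E xv y X \<longleftrightarrow> E \<subseteq> V \<times> V \<and> (\<forall>u v w. (u,v) \<in> E \<longrightarrow> (v,w) \<notin> E) \<and>
 (\<forall>u v. (u,v) \<in> E \<longrightarrow> y u < y v \<and> continuous_on {real_of_int (y u)..real_of_int (y v)} (X u v) \<and>
    X u v (y u) = xv u \<and> X u v (y v) = xv v) \<and>
 (\<forall>u v u' v' t. (u,v) \<in> E \<longrightarrow> (u',v') \<in> E \<longrightarrow> (u,v) \<noteq> (u',v') \<longrightarrow>
    t \<in> {real_of_int (y u)..real_of_int (y v)} \<longrightarrow> t \<in> {real_of_int (y u')..real_of_int (y v')} \<longrightarrow>
    X u v t = X u' v' t \<longrightarrow> (\<exists>w. (w = u \<or> w = v) \<and> (w = u' \<or> w = v') \<and> real_of_int (y w) = t)) \<and>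
 (\<forall>u v w t. (u,v) \<in> E \<longrightarrow> w \<in> V \<longrightarrow> t \<in> {real_of_int (y u)..real_of_int (y v)} \<longrightarrow>
    X u v t = xv w \<longrightarrow> t = real_of_int (y w) \<longrightarrow> w = u \<or> w = v)"

lemma goodS_D1: assumes "goodS V E xv y X" shows "E \<subseteq> V \<times> V"
  using assms unfolding goodS_def by (elim conjE) assumption
lemma goodS_D2: assumes "goodS V E xv y X" shows "\<forall>u v w. (u,v) \<in> E \<longrightarrow> (v,w) \<notin> E"
  using assms unfolding goodS_def by (elim conjE) assumption
lemma goodS_D3: assumes "goodS V E xv y X" shows "\<forall>u v. (u,v) \<in> E \<longrightarrow> y u < y v \<and> continuous_on {real_of_int (y u)..real_of_int (y v)} (X u v) \<and>
    X u v (y u) = xv u \<and> X u v (y v) = xv v"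
  using assms unfolding goodS_def by (elim conjE) assumption
lemma goodS_D4: assumes "goodS V E xv y X" shows "\<forall>u v u' v' t. (u,v) \<in> E \<longrightarrow> (u',v') \<in> E \<longrightarrow> (u,v) \<noteq> (u',v') \<longrightarrow>
    t \<in> {real_of_int (y u)..real_of_int (y v)} \<longrightarrow> t \<in> {real_of_int (y u')..real_of_int (y v')} \<longrightarrow>
    X u v t = X u' v' t \<longrightarrow> (\<exists>w. (w = u \<or> w = v) \<and> (w = u' \<or> w = v') \<and> real_of_int (y w) = t)"
  using assms unfolding goodS_def by (elim conjE) assumption
lemma goodS_D5: assumes "goodS V E xv y X" shows "\<forall>u v w t. (u,v) \<in> E \<longrightarrow> w \<in> V \<longrightarrow> t \<in> {real_of_int (y u)..real_of_int (y v)} \<longrightarrow>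
    X u v t = xv w \<longrightarrow> t = real_of_int (y w) \<longrightarrow> w = u \<or> w = v"
  using assms unfolding goodS_def by (elim conjE) assumption

lemma goodS_E: assumes "goodS V E xv y X" "(u,v) \<in> E"
  shows "y u < y v" "continuous_on {real_of_int (y u)..real_of_int (y v)} (X u v)"
    "X u v (y u) = xv u" "X u v (y v) = xv v" "u \<in> V" "v \<in> V"
  using goodS_D3[OF assms(1)] goodS_D1[OF assms(1)] assms(2) by blast+

lemma goodS_P1: assumes "goodS V E xv y X" "(u,v) \<in> E" "(u',v') \<in> E" "(u,v) \<noteq> (u',v')"
   "t \<in> {real_of_int (y u)..real_of_int (y v)}" "t \<in> {real_of_int (y u')..real_of_int (y v')}"
   "X u v t = X u' v' t"
 shows "\<exists>w. (w = u \<or> w = v) \<and> (w = u' \<or> w = v') \<and> real_of_int (y w) = t"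
  using goodS_D4[OF assms(1)] assms(2-) by blast

lemma goodS_P2: assumes "goodS V E xv y X" "(u,v) \<in> E" "w \<in> V" "t \<in> {real_of_int (y u)..real_of_int (y v)}"
    "X u v t = xv w" "t = real_of_int (y w)"
  shows "w = u \<or> w = v"
  using goodS_D5[OF assms(1)] assms(2-) by blast

lemma goodS_short: assumes "goodS V E xv y X" "(u,v) \<in> E" shows "(v,w) \<notin> E"
  using goodS_D2[OF assms(1)] assms(2) by blast

lemma goodS_refl:
  assumes "goodS V E xv y X"
  shows "goodS V (E\<inverse>) xv (\<lambda>v. - y v) (\<lambda>u v t. X v u (- t))"
proof -
  have c: "continuous_on {real_of_int (- y u)..real_of_int (- y v)} (\<lambda>t. X v u (- t))"
    if "(v,u) \<in> E" for u v
  proof -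
    have "continuous_on {real_of_int (y v)..real_of_int (y u)} (X v u)"
      using goodS_E(2)[OF assms that] .
    moreover have "uminus ` {real_of_int (- y u)..real_of_int (- y v)} \<subseteq> {real_of_int (y v)..real_of_int (y u)}"
      by auto
    ultimately show ?thesis
      by (intro continuous_on_compose2[where f=uminus and g="X v u"]) (auto intro: continuous_intros)
  qed
  show ?thesis
    unfolding goodS_def
  proof (intro conjI allI impI)
    show "E\<inverse> \<subseteq> V \<times> V" using goodS_D1[OF assms] by auto
  next
    fix u v w assume "(u, v) \<in> E\<inverse>" then show "(v, w) \<notin> E\<inverse>" using goodS_short[OF assms] by auto
  next
    fix u v assume "(u, v) \<in> E\<inverse>"
    then show "- y u < - y v" "X v u (- real_of_int (- y u)) = xv u" "X v u (- real_of_int (- y v)) = xv v"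
      using goodS_E(1,3,4)[OF assms, of v u] by auto
    show "continuous_on {real_of_int (- y u)..real_of_int (- y v)} (\<lambda>t. X v u (- t))"
      using c \<open>(u, v) \<in> E\<inverse>\<close> by auto
  next
    fix u v u' v' t
    assume h: "(u, v) \<in> E\<inverse>" "(u', v') \<in> E\<inverse>" "(u, v) \<noteq> (u', v')"
      "t \<in> {real_of_int (- y u)..real_of_int (- y v)}" "t \<in> {real_of_int (- y u')..real_of_int (- y v')}"
      "X v u (- t) = X v' u' (- t)"
    have "(v,u) \<in> E" "(v',u') \<in> E" "(v,u) \<noteq> (v',u')" using h by auto
    moreover have "-t \<in> {real_of_int (y v)..real_of_int (y u)}" "-t \<in> {real_of_int (y v')..real_of_int (y u')}"
      using h(4,5) by auto
    ultimately have "\<exists>w. (w = v \<or> w = u) \<and> (w = v' \<or> w = u') \<and> real_of_int (y w) = - t"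
      using goodS_P1[OF assms, of v u v' u' "-t"] h(6) by blast
    then show "\<exists>w. (w = u \<or> w = v) \<and> (w = u' \<or> w = v') \<and> real_of_int (- y w) = t" by force
  next
    fix u v w t
    assume h: "(u, v) \<in> E\<inverse>" "w \<in> V" "t \<in> {real_of_int (- y u)..real_of_int (- y v)}"
      "X v u (- t) = xv w" "t = real_of_int (- y w)"
    have "(v,u) \<in> E" "-t \<in> {real_of_int (y v)..real_of_int (y u)}" using h by auto
    then show "w = u \<or> w = v" using goodS_P2[OF assms, of v u w "-t"] h by auto
  qed
qed

definition ordl :: "('v \<Rightarrow> 'v \<Rightarrow> real \<Rightarrow> real) \<Rightarrow> ('v \<Rightarrow> int) \<Rightarrow> 'v \<Rightarrow> 'v \<Rightarrow> 'v \<Rightarrow> bool" where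
"ordl X y p a b \<longleftrightarrow> (\<forall>t. real_of_int (y p) < t \<and> t < real_of_int (min (y a) (y b)) \<longrightarrow> X p a t < X p b t)"

lemma ordl_irrefl: assumes "goodS V E xv y X" "(p,a) \<in> E" shows "\<not> ordl X y p a a"
proof
  assume "ordl X y p a a"
  moreover have "y p < y a" using goodS_E[OF assms] by simp
  ultimately show False unfolding ordl_def
    by (auto dest: spec[where x="real_of_int (y p) + 1/2"])
qed

lemma ordl_total:
  assumes g: "goodS V E xv y X" and pa: "(p,a) \<in> E" and pb: "(p,b) \<in> E" and ab: "a \<noteq> b"
  shows "ordl X y p a b \<or> ordl X y p b a"
proof (rule ccontr)
  assume "\<not> ?thesis"
  then obtain t1 t2 where t1: "real_of_int (y p) < t1" "t1 < real_of_int (min (y a) (y b))" "X p a t1 \<ge> X p b t1"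
    and t2: "real_of_int (y p) < t2" "t2 < real_of_int (min (y a) (y b))" "X p b t2 \<ge> X p a t2"
    unfolding ordl_def by (auto simp: min.commute not_less)
  define f where "f = (\<lambda>t. X p a t - X p b t)"
  have ne: "\<And>t. real_of_int (y p) < t \<Longrightarrow> t < real_of_int (min (y a) (y b)) \<Longrightarrow> f t \<noteq> 0"
  proof
    fix t assume h: "real_of_int (y p) < t" "t < real_of_int (min (y a) (y b))" "f t = 0"
    have "\<exists>w. (w = p \<or> w = a) \<and> (w = p \<or> w = b) \<and> real_of_int (y w) = t"
      using h ab by (intro goodS_P1[OF g pa pb]) (auto simp: f_def)
    then show False using h ab by auto
  qed
  have ca: "continuous_on {real_of_int (y p)..real_of_int (y a)} (X p a)" using goodS_E[OF g pa] by simp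
  have cb: "continuous_on {real_of_int (y p)..real_of_int (y b)} (X p b)" using goodS_E[OF g pb] by simp
  have cf: "continuous_on {min t1 t2..max t1 t2} f"
  proof -
    have "{min t1 t2..max t1 t2} \<subseteq> {real_of_int (y p)..real_of_int (y a)}"
         "{min t1 t2..max t1 t2} \<subseteq> {real_of_int (y p)..real_of_int (y b)}" using t1 t2 by auto
    then show ?thesis unfolding f_def
      by (intro continuous_intros continuous_on_subset[OF ca] continuous_on_subset[OF cb]) auto
  qed
  have "\<exists>t\<ge>min t1 t2. t \<le> max t1 t2 \<and> f t = 0"
  proof (cases "t1 \<le> t2")
    case True
    then show ?thesis using IVT2'[of f t2 0 t1] cf t1 t2 by (auto simp: f_def min_def max_def)
  next
    case False
    then show ?thesis using IVT'[of f t2 0 t1] cf t1 t2 by (auto simp: f_def min_def max_def)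
  qed
  then obtain t where "min t1 t2 \<le> t" "t \<le> max t1 t2" "f t = 0" by blast
  then show False using ne[of t] t1 t2 by auto
qed

lemma trap:
  assumes g: "goodS V E xv y X" and pa: "(p,a) \<in> E" and px: "(p,x) \<in> E" and pc: "(p,c) \<in> E"
    and oax: "ordl X y p a x" and oxc: "ordl X y p x c" and ya: "y x \<le> y a" and yc: "y x \<le> y c"
    and zx: "(z,x) \<in> E" and zp: "z \<noteq> p"
  shows "y p < y z"
proof (rule ccontr)
  assume "\<not> y p < y z"
  then have zle: "y z \<le> y p" by simp
  have ax: "a \<noteq> x" using oax ordl_irrefl[OF g pa] by auto
  have xc: "x \<noteq> c" using oxc ordl_irrefl[OF g px] by auto
  have ypx: "y p < y x" using goodS_E[OF g px] by simp
  have pV: "p \<in> V" using goodS_E[OF g px] by simp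
  have xp: "x \<noteq> p" using ypx by auto
  define t0 where "t0 = (real_of_int (y p) + real_of_int (y x)) / 2"
  have t0: "real_of_int (y p) < t0" "t0 < real_of_int (y x)" using ypx unfolding t0_def by auto
  have ca: "continuous_on {real_of_int (y p)..real_of_int (y a)} (X p a)" using goodS_E[OF g pa] by simp
  have cx: "continuous_on {real_of_int (y p)..real_of_int (y x)} (X p x)" using goodS_E[OF g px] by simp
  have cc: "continuous_on {real_of_int (y p)..real_of_int (y c)} (X p c)" using goodS_E[OF g pc] by simp
  have cz: "continuous_on {real_of_int (y z)..real_of_int (y x)} (X z x)" using goodS_E[OF g zx] by simp
  have Xxx: "X p x (y x) = xv x" "X z x (y x) = xv x" using goodS_E[OF g px] goodS_E[OF g zx] by auto
  have Xpp: "X p a (y p) = xv p" "X p c (y p) = xv p" using goodS_E[OF g pa] goodS_E[OF g pc] by auto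
  have ya': "real_of_int (y x) \<le> real_of_int (y a)" "real_of_int (y x) \<le> real_of_int (y c)" using ya yc by auto
  have A: "X p a (y x) < xv x"
  proof -
    have ne: "X p a (y x) \<noteq> xv x"
    proof
      assume "X p a (y x) = xv x"
      then have "x = p \<or> x = a" using goodS_P2[OF g pa, of x "y x"] goodS_E[OF g px] ya' ypx by auto
      then show False using ax xp by auto
    qed
    have lt0: "X p a t0 < X p x t0" using oax t0 ya unfolding ordl_def by (auto simp: min_absorb2)
    show ?thesis
    proof (rule ccontr)
      assume "\<not> ?thesis"
      then have gt: "X p a (y x) > X p x (y x)" using ne Xxx by auto
      define f where "f = (\<lambda>t. X p a t - X p x t)"
      have "continuous_on {t0..real_of_int (y x)} f" unfolding f_def
        using t0 ya' by (intro continuous_intros continuous_on_subset[OF ca] continuous_on_subset[OF cx]) auto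
      then obtain t where t: "t0 \<le> t" "t \<le> real_of_int (y x)" "f t = 0"
        using IVT'[of f t0 0 "real_of_int (y x)"] lt0 gt t0 unfolding f_def by auto
      then have "\<exists>w. (w = p \<or> w = a) \<and> (w = p \<or> w = x) \<and> real_of_int (y w) = t"
        using t0 ya' ax by (intro goodS_P1[OF g pa px]) (auto simp: f_def)
      then show False using ax t t0 by auto
    qed
  qed
  have C: "xv x < X p c (y x)"
  proof -
    have ne: "X p c (y x) \<noteq> xv x"
    proof
      assume "X p c (y x) = xv x"
      then have "x = p \<or> x = c" using goodS_P2[OF g pc, of x "y x"] goodS_E[OF g px] ya' ypx by auto
      then show False using xc xp by auto
    qed
    have lt0: "X p x t0 < X p c t0" using oxc t0 yc unfolding ordl_def by (auto simp: min_absorb1)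
    show ?thesis
    proof (rule ccontr)
      assume "\<not> ?thesis"
      then have gt: "X p c (y x) < X p x (y x)" using ne Xxx by auto
      define f where "f = (\<lambda>t. X p c t - X p x t)"
      have "continuous_on {t0..real_of_int (y x)} f" unfolding f_def
        using t0 ya' by (intro continuous_intros continuous_on_subset[OF cc] continuous_on_subset[OF cx]) auto
      then obtain t where t: "t0 \<le> t" "t \<le> real_of_int (y x)" "f t = 0"
        using IVT2'[of f "real_of_int (y x)" 0 t0] lt0 gt t0 unfolding f_def by auto
      then have "\<exists>w. (w = p \<or> w = c) \<and> (w = p \<or> w = x) \<and> real_of_int (y w) = t"
        using t0 ya' xc by (intro goodS_P1[OF g pc px]) (auto simp: f_def)
      then show False using xc t t0 by auto
    qed
  qed
  have zne: "X z x (y p) \<noteq> xv p"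
  proof
    assume "X z x (y p) = xv p"
    then have "p = z \<or> p = x" using goodS_P2[OF g zx pV, of "y p"] zle ypx by auto
    then show False using zp xp by auto
  qed
  have za: "z \<noteq> a" using goodS_short[OF g pa, of x] zx by auto
  have zc: "z \<noteq> c" using goodS_short[OF g pc, of x] zx by auto
  have sub: "{real_of_int (y p)..real_of_int (y x)} \<subseteq> {real_of_int (y z)..real_of_int (y x)}" using zle by auto
  show False
  proof (cases "X z x (y p) > xv p")
    case True
    define f where "f = (\<lambda>t. X p c t - X z x t)"
    have "continuous_on {real_of_int (y p)..real_of_int (y x)} f" unfolding f_def
      using ya' by (intro continuous_intros continuous_on_subset[OF cc] continuous_on_subset[OF cz sub]) auto
    then obtain t where t: "real_of_int (y p) \<le> t" "t \<le> real_of_int (y x)" "f t = 0"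
      using IVT'[of f "real_of_int (y p)" 0 "real_of_int (y x)"] True C Xxx Xpp ypx unfolding f_def by auto
    then have "\<exists>w. (w = p \<or> w = c) \<and> (w = z \<or> w = x) \<and> real_of_int (y w) = t"
      using ya' xc zle by (intro goodS_P1[OF g pc zx]) (auto simp: f_def)
    then show False using xc zc zp xp by auto
  next
    case False
    then have F: "X z x (y p) < xv p" using zne by auto
    define f where "f = (\<lambda>t. X p a t - X z x t)"
    have "continuous_on {real_of_int (y p)..real_of_int (y x)} f" unfolding f_def
      using ya' by (intro continuous_intros continuous_on_subset[OF ca] continuous_on_subset[OF cz sub]) auto
    then obtain t where t: "real_of_int (y p) \<le> t" "t \<le> real_of_int (y x)" "f t = 0"
      using IVT2'[of f "real_of_int (y x)" 0 "real_of_int (y p)"] F A Xxx Xpp ypx unfolding f_def by auto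
    then have "\<exists>w. (w = p \<or> w = a) \<and> (w = z \<or> w = x) \<and> real_of_int (y w) = t"
      using ya' ax zle by (intro goodS_P1[OF g pa zx]) (auto simp: f_def)
    then show False using ax za zp xp by auto
  qed
qed

definition Nbr :: "('v \<times> 'v) set \<Rightarrow> 'v \<Rightarrow> 'v set" where
  "Nbr E p = {c. (p,c) \<in> E \<or> (c,p) \<in> E}"

fun gd :: "nat \<Rightarrow> ('v \<times> 'v) set \<Rightarrow> nat \<Rightarrow> 'v \<Rightarrow> 'v \<Rightarrow> bool" where
  "gd r E 0 p q = True"
| "gd r E (Suc m) p q = (\<exists>C. C \<subseteq> Nbr E p - {q} \<and> finite C \<and> r \<le> card C \<and> (\<forall>c\<in>C. gd r E m c p))"

lemma Nbr_conv[simp]: "Nbr (E\<inverse>) p = Nbr E p" unfolding Nbr_def by auto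

lemma gd_conv: "gd r (E\<inverse>) m p q = gd r E m p q"
  by (induction m arbitrary: p q) auto

lemma gd_mono: "E \<subseteq> E' \<Longrightarrow> gd r E m p q \<Longrightarrow> gd r E' m p q"
proof (induction m arbitrary: p q)
  case 0 then show ?case by simp
next
  case (Suc m)
  then obtain C where "C \<subseteq> Nbr E p - {q}" "finite C" "r \<le> card C" "\<forall>c\<in>C. gd r E m c p" by auto
  moreover have "Nbr E p \<subseteq> Nbr E' p" using Suc.prems unfolding Nbr_def by auto
  ultimately show ?case using Suc by (auto intro!: exI[where x=C])
qed

lemma descent:
  "\<forall>(V::'v set) E xv y X p q k. goodS V E xv y X \<longrightarrow> gd r E m p q \<longrightarrow> 1 \<le> m \<longrightarrow> k + 1 \<le> m \<longrightarrow> 2*k+1 \<le> r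
     \<longrightarrow> (\<forall>c \<in> Nbr E p - {q}. (p,c) \<in> E \<and> y c \<le> y p + int k) \<longrightarrow> False"
proof (induction m)
  case 0 then show ?case by simp
next
  case (Suc m)
  show ?case
  proof (intro allI impI)
    fix V :: "'v set" and E xv y X p q k
    assume g: "goodS V E xv y X" and gdp: "gd r E (Suc m) p q" and "1 \<le> Suc m" and km: "k + 1 \<le> Suc m"
      and kr: "2*k+1 \<le> r" and nb: "\<forall>c \<in> Nbr E p - {q}. (p,c) \<in> E \<and> y c \<le> y p + int k"
    obtain C where C: "C \<subseteq> Nbr E p - {q}" "finite C" "r \<le> card C" "\<forall>c\<in>C. gd r E m c p"
      using gdp by auto
    have Cout: "\<And>c. c \<in> C \<Longrightarrow> (p,c) \<in> E" using C nb by blast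
    have Cy: "\<And>c. c \<in> C \<Longrightarrow> y p < y c \<and> y c \<le> y p + int k" using C nb goodS_E(1)[OF g] by blast
    have h1: "card {y p + 1..y p + int k} = k" by simp
    have h2: "finite {y p + 1..y p + int k}" by simp
    have h3: "\<forall>a\<in>C. \<forall>b\<in>C. a \<noteq> b \<longrightarrow> ordl X y p a b \<or> ordl X y p b a"
        using ordl_total[OF g] Cout by blast
    have h4: "y ` C \<subseteq> {y p + 1..y p + int k}" using Cy by force
    have h5: "2 * card {y p + 1..y p + int k} + 1 \<le> card C" using C kr by simp
    have "\<exists>a\<in>C. \<exists>x\<in>C. \<exists>c\<in>C. ordl X y p a x \<and> ordl X y p x c \<and> y x \<le> y a \<and> y x \<le> y c"
      by (rule trap_comb[where y=y and lt="ordl X y p" and n=k, OF h1 C(2) h2 h3 h4 h5])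
    then obtain a x c where acx: "a \<in> C" "x \<in> C" "c \<in> C" "ordl X y p a x" "ordl X y p x c" "y x \<le> y a" "y x \<le> y c"
      by blast
    have px: "(p,x) \<in> E" using Cout acx by auto
    have xb: "y p < y x" "y x \<le> y p + int k" using Cy acx by auto
    define k' where "k' = nat (y x - y p - 1)"
    have k'_eq: "int k' = y x - y p - 1" unfolding k'_def using xb by simp
    have trapz: "\<And>z. (z,x) \<in> E \<Longrightarrow> z \<noteq> p \<Longrightarrow> y p < y z"
      using trap[OF g Cout[OF acx(1)] px Cout[OF acx(3)] acx(4,5,6,7)] by blast
    have g': "goodS V (E\<inverse>) xv (\<lambda>v. - y v) (\<lambda>u v t. X v u (- t))" by (rule goodS_refl[OF g])
    have gdx: "gd r (E\<inverse>) m x p" using C(4) acx(2) by (simp add: gd_conv)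
    have nb': "\<forall>z \<in> Nbr (E\<inverse>) x - {p}. (x,z) \<in> E\<inverse> \<and> - y z \<le> - y x + int k'"
    proof
      fix z assume z: "z \<in> Nbr (E\<inverse>) x - {p}"
      then have "(z,x) \<in> E" using goodS_short[OF g px] unfolding Nbr_def by auto
      then show "(x,z) \<in> E\<inverse> \<and> - y z \<le> - y x + int k'"
        using trapz[of z] z k'_eq by auto
    qed
    have "k' + 1 \<le> k" using k'_eq xb by linarith
    then have m1: "1 \<le> m" "k' + 1 \<le> m" "2*k'+1 \<le> r" using km kr by linarith+
    show False
      using Suc.IH[rule_format, of V "E\<inverse>" xv "\<lambda>v. - y v" "\<lambda>u v t. X v u (- t)" x p k'] g' gdx m1 nb' by blast
  qed
qed

lemma curve_param:
  fixes g :: "real \<Rightarrow> real \<times> real"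
  assumes pg: "path g" and sm: "strict_mono_on {0..1} (\<lambda>s. snd (g s))"
  defines "G \<equiv> the_inv_into {0..1} (\<lambda>s. snd (g s))"
  shows "snd (g 0) < snd (g 1)"
    and "continuous_on {snd (g 0)..snd (g 1)} (\<lambda>t. fst (g (G t)))"
    and "\<And>t. t \<in> {snd (g 0)..snd (g 1)} \<Longrightarrow> g (G t) = (fst (g (G t)), t) \<and> G t \<in> {0..1}"
    and "\<And>q. q \<in> path_image g \<Longrightarrow> snd q \<in> {snd (g 0)..snd (g 1)} \<and> q = g (G (snd q))"
    and "G (snd (g 0)) = 0" "G (snd (g 1)) = 1"
proof -
  define h where "h = (\<lambda>s. snd (g s))"
  have cg: "continuous_on {0..1} g" using pg unfolding path_def .
  have ch: "continuous_on {0..1} h" unfolding h_def by (intro continuous_intros cg)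
  have inj: "inj_on h {0..1}" unfolding h_def by (rule strict_mono_on_imp_inj_on[OF sm])
  show h01: "snd (g 0) < snd (g 1)" using strict_mono_onD[OF sm, of 0 1] by simp
  have img: "h ` {0..1} = {h 0..h 1}"
  proof
    show "h ` {0..1} \<subseteq> {h 0..h 1}"
      using strict_mono_on_leD[OF sm] unfolding h_def by fastforce
    show "{h 0..h 1} \<subseteq> h ` {0..1}"
    proof
      fix t assume "t \<in> {h 0..h 1}"
      then obtain s where "0 \<le> s" "s \<le> 1" "h s = t" using IVT'[of h 0 t 1] ch by auto
      then show "t \<in> h ` {0..1}" by auto
    qed
  qed
  have Gh: "\<And>s. s \<in> {0..1} \<Longrightarrow> G (h s) = s" unfolding G_def h_def
    using the_inv_into_f_f[OF inj[unfolded h_def]] by blast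
  have hG: "\<And>t. t \<in> {h 0..h 1} \<Longrightarrow> h (G t) = t" unfolding G_def
    using f_the_inv_into_f[OF inj] img unfolding h_def by auto
  have Gin: "\<And>t. t \<in> {h 0..h 1} \<Longrightarrow> G t \<in> {0..1}" unfolding G_def
    using the_inv_into_into[OF inj] img unfolding h_def by (metis order_refl)
  have cG: "continuous_on {h 0..h 1} G"
    using continuous_on_inv[OF ch compact_Icc, of G] Gh img by auto
  have "continuous_on {h 0..h 1} (\<lambda>t. g (G t))"
    by (rule continuous_on_compose2[OF cg cG]) (use Gin in auto)
  then show "continuous_on {snd (g 0)..snd (g 1)} (\<lambda>t. fst (g (G t)))"
    unfolding h_def by (intro continuous_intros)
  show "\<And>t. t \<in> {snd (g 0)..snd (g 1)} \<Longrightarrow> g (G t) = (fst (g (G t)), t) \<and> G t \<in> {0..1}"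
    using hG Gin unfolding h_def by (metis prod.collapse)
  show "\<And>q. q \<in> path_image g \<Longrightarrow> snd q \<in> {snd (g 0)..snd (g 1)} \<and> q = g (G (snd q))"
  proof -
    fix q assume "q \<in> path_image g"
    then obtain s where s: "s \<in> {0..1}" "q = g s" unfolding path_image_def by auto
    then have "snd q = h s" unfolding h_def by simp
    then show "snd q \<in> {snd (g 0)..snd (g 1)} \<and> q = g (G (snd q))"
      using img s Gh unfolding h_def by auto
  qed
  show "G (snd (g 0)) = 0" "G (snd (g 1)) = 1" using Gh[of 0] Gh[of 1] unfolding h_def by auto
qed

definition Xd :: "('v \<times> 'v \<Rightarrow> real \<Rightarrow> real \<times> real) \<Rightarrow> 'v \<Rightarrow> 'v \<Rightarrow> real \<Rightarrow> real" where
  "Xd c u v t = fst (c (u,v) (the_inv_into {0..1} (\<lambda>s. snd (c (u,v) s)) t))"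

lemma drawing_edge:
  assumes d: "upward_planar_layered_drawing V E x y c" and e: "(u,v) \<in> E"
  shows "y u < y v" "continuous_on {real_of_int (y u)..real_of_int (y v)} (Xd c u v)"
    "Xd c u v (y u) = x u" "Xd c u v (y v) = x v"
    "\<And>t. t \<in> {real_of_int (y u)..real_of_int (y v)} \<Longrightarrow> (Xd c u v t, t) \<in> path_image (c (u,v))"
    "path_image (c (u,v)) \<inter> vpt x y ` V \<subseteq> {vpt x y u, vpt x y v}"
proof -
  have all: "\<forall>(u,v)\<in>E. path (c (u,v)) \<and> pathstart (c (u,v)) = vpt x y u \<and>
                 pathfinish (c (u,v)) = vpt x y v \<and>
                 strict_mono_on {0..1} (\<lambda>t. snd (c (u,v) t)) \<and>
                 path_image (c (u,v)) \<inter> vpt x y ` V \<subseteq> {vpt x y u, vpt x y v}"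
    using d unfolding upward_planar_layered_drawing_def by (elim conjE) assumption
  have H: "path (c (u,v)) \<and> pathstart (c (u,v)) = vpt x y u \<and>
                 pathfinish (c (u,v)) = vpt x y v \<and>
                 strict_mono_on {0..1} (\<lambda>t. snd (c (u,v) t)) \<and>
                 path_image (c (u,v)) \<inter> vpt x y ` V \<subseteq> {vpt x y u, vpt x y v}"
    using bspec[OF all e] by simp
  have pth: "path (c (u,v))" using H by (elim conjE)
  have ps: "pathstart (c (u,v)) = vpt x y u" using H by (elim conjE)
  have pf: "pathfinish (c (u,v)) = vpt x y v" using H by (elim conjE)
  have sm: "strict_mono_on {0..1} (\<lambda>t. snd (c (u,v) t))" using H by (elim conjE)
  have pim: "path_image (c (u,v)) \<inter> vpt x y ` V \<subseteq> {vpt x y u, vpt x y v}" using H by (elim conjE)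
  show "path_image (c (u,v)) \<inter> vpt x y ` V \<subseteq> {vpt x y u, vpt x y v}" by (rule pim)
  have c0: "c (u,v) 0 = (x u, real_of_int (y u))" and c1: "c (u,v) 1 = (x v, real_of_int (y v))"
    using ps pf unfolding pathstart_def pathfinish_def vpt_def by auto
  note cp = curve_param[OF pth sm]
  show "y u < y v" using cp(1) c0 c1 by simp
  show "continuous_on {real_of_int (y u)..real_of_int (y v)} (Xd c u v)"
    using cp(2) c0 c1 unfolding Xd_def by simp
  show "Xd c u v (y u) = x u" "Xd c u v (y v) = x v"
    using cp(5,6) c0 c1 unfolding Xd_def by simp_all
  fix t assume "t \<in> {real_of_int (y u)..real_of_int (y v)}"
  then have "c (u,v) (the_inv_into {0..1} (\<lambda>s. snd (c (u,v) s)) t) = (Xd c u v t, t)"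
    "the_inv_into {0..1} (\<lambda>s. snd (c (u,v) s)) t \<in> {0..1}"
    using cp(3)[of t] c0 c1 unfolding Xd_def by auto
  then show "(Xd c u v t, t) \<in> path_image (c (u,v))" unfolding path_image_def by force
qed

lemma drawing_good:
  assumes d: "upward_planar_layered_drawing V E x y c" and EV: "E \<subseteq> V \<times> V" and ps: "all_paths_short E"
  shows "goodS V E x y (Xd c)"
  unfolding goodS_def
proof (intro conjI allI impI)
  show "E \<subseteq> V \<times> V" by fact
next
  fix u v w assume "(u,v) \<in> E" then show "(v,w) \<notin> E" using ps unfolding all_paths_short_def by auto
next
  fix u v assume e: "(u,v) \<in> E"
  show "y u < y v" "continuous_on {real_of_int (y u)..real_of_int (y v)} (Xd c u v)"
    "Xd c u v (y u) = x u" "Xd c u v (y v) = x v" using drawing_edge[OF d e] by auto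
next
  fix u v u' v' t
  assume e: "(u,v) \<in> E" and e': "(u',v') \<in> E" and ne: "(u,v) \<noteq> (u',v')"
    and t: "t \<in> {real_of_int (y u)..real_of_int (y v)}" and t': "t \<in> {real_of_int (y u')..real_of_int (y v')}"
    and eq: "Xd c u v t = Xd c u' v' t"
  have "(Xd c u v t, t) \<in> path_image (c (u,v))" using drawing_edge(5)[OF d e t] .
  moreover have "(Xd c u v t, t) \<in> path_image (c (u',v'))" using drawing_edge(5)[OF d e' t'] eq by simp
  moreover have "path_image (c (u,v)) \<inter> path_image (c (u',v')) \<subseteq> vpt x y ` ({u,v} \<inter> {u',v'})"
    using d e e' ne unfolding upward_planar_layered_drawing_def by fastforce
  ultimately obtain w where "w \<in> {u,v} \<inter> {u',v'}" "(Xd c u v t, t) = vpt x y w" by blast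
  then show "\<exists>w. (w = u \<or> w = v) \<and> (w = u' \<or> w = v') \<and> real_of_int (y w) = t"
    unfolding vpt_def by auto
next
  fix u v w t
  assume e: "(u,v) \<in> E" and w: "w \<in> V" and t: "t \<in> {real_of_int (y u)..real_of_int (y v)}"
    and xw: "Xd c u v t = x w" and tw: "t = real_of_int (y w)"
  have "vpt x y w \<in> path_image (c (u,v))" using drawing_edge(5)[OF d e t] xw tw unfolding vpt_def by simp
  then have "vpt x y w \<in> {vpt x y u, vpt x y v}" using drawing_edge(6)[OF d e] w by blast
  moreover have "inj_on (vpt x y) V" using d unfolding upward_planar_layered_drawing_def by auto
  moreover have "u \<in> V" "v \<in> V" using e EV by auto
  ultimately show "w = u \<or> w = v" using w by (auto dest: inj_onD)
qed

fun SZ :: "nat \<Rightarrow> nat \<Rightarrow> nat" where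
  "SZ d 0 = 1"
| "SZ d (Suc j) = 1 + d * SZ d j"

fun EA :: "nat \<Rightarrow> nat \<Rightarrow> nat \<Rightarrow> (nat \<times> nat) set" and EB :: "nat \<Rightarrow> nat \<Rightarrow> nat \<Rightarrow> (nat \<times> nat) set" where
  "EA d 0 f = {}"
| "EA d (Suc j) f = (\<Union>i<d. insert (f, f + (i+1) * SZ d j) (EB d j (f + 1 + i * SZ d j)))"
| "EB d 0 f = {}"
| "EB d (Suc j) f = (\<Union>i<d. insert (f + i * SZ d j, f + d * SZ d j) (EA d j (f + i * SZ d j)))"

lemma SZ_pos: "SZ d j \<ge> 1" by (induction j) auto

lemma blk_uniq: fixes S :: nat assumes "i*S \<le> n" "n < i*S + S" "k*S \<le> n" "n < k*S + S" shows "i = k"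
proof (rule ccontr)
  assume "i \<noteq> k"
  then have "Suc i \<le> k \<or> Suc k \<le> i" by auto
  then show False
  proof
    assume "Suc i \<le> k" then have "Suc i * S \<le> k * S" by (rule mult_le_mono1)
    then show False using assms by simp
  next
    assume "Suc k \<le> i" then have "Suc k * S \<le> i * S" by (rule mult_le_mono1)
    then show False using assms by simp
  qed
qed

lemma blk_le: fixes S :: nat assumes "i < d" shows "i * S + S \<le> d * S"
proof -
  have "Suc i * S \<le> d * S" using assms by (intro mult_le_mono1) simp
  then show ?thesis by simp
qed

lemma range_AB:
  "(\<forall>f a b. (a,b)\<in>EA d j f \<longrightarrow> f \<le> a \<and> a < b \<and> b < f + SZ d j) \<and>
   (\<forall>f a b. (a,b)\<in>EB d j f \<longrightarrow> f \<le> a \<and> a < b \<and> b < f + SZ d j)"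
proof (induction j)
  case 0 then show ?case by simp
next
  case (Suc j)
  let ?S = "SZ d j"
  have S1: "?S \<ge> 1" by (rule SZ_pos)
  have A: "f \<le> a \<and> a < b \<and> b < f + SZ d (Suc j)" if ab0: "(a,b)\<in>EA d (Suc j) f" for f a b
  proof -
    obtain i where i: "i < d" and ab: "(a = f \<and> b = f + (i+1) * ?S) \<or> (a,b) \<in> EB d j (f + 1 + i * ?S)"
      using ab0 unfolding EA.simps by blast
    have le: "i * ?S + ?S \<le> d * ?S" using blk_le[OF i] .
    from ab show ?thesis
    proof
      assume "a = f \<and> b = f + (i+1) * ?S" then show ?thesis using le S1 by auto
    next
      assume "(a,b) \<in> EB d j (f + 1 + i * ?S)"
      then have "f + 1 + i * ?S \<le> a \<and> a < b \<and> b < f + 1 + i * ?S + ?S" by (rule Suc.IH[THEN conjunct2, rule_format])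
      then show ?thesis using le by auto
    qed
  qed
  have B: "f \<le> a \<and> a < b \<and> b < f + SZ d (Suc j)" if ab0: "(a,b)\<in>EB d (Suc j) f" for f a b
  proof -
    obtain i where i: "i < d" and ab: "(a = f + i * ?S \<and> b = f + d * ?S) \<or> (a,b) \<in> EA d j (f + i * ?S)"
      using ab0 unfolding EB.simps by blast
    have le: "i * ?S + ?S \<le> d * ?S" using blk_le[OF i] .
    from ab show ?thesis
    proof
      assume "a = f + i * ?S \<and> b = f + d * ?S" then show ?thesis using le S1 i by auto
    next
      assume "(a,b) \<in> EA d j (f + i * ?S)"
      then have "f + i * ?S \<le> a \<and> a < b \<and> b < f + i * ?S + ?S" by (rule Suc.IH[THEN conjunct1, rule_format])
      then show ?thesis using le by auto
    qed
  qed
  show ?case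
  proof (rule conjI; intro allI impI)
    fix f a b assume "(a,b) \<in> EA d (Suc j) f" then show "f \<le> a \<and> a < b \<and> b < f + SZ d (Suc j)" by (rule A)
  next
    fix f a b assume "(a,b) \<in> EB d (Suc j) f" then show "f \<le> a \<and> a < b \<and> b < f + SZ d (Suc j)" by (rule B)
  qed
qed

lemma rangeA: "(a,b)\<in>EA d j f \<Longrightarrow> f \<le> a \<and> a < b \<and> b < f + SZ d j" by (rule range_AB[THEN conjunct1, rule_format])
lemma rangeB: "(a,b)\<in>EB d j f \<Longrightarrow> f \<le> a \<and> a < b \<and> b < f + SZ d j" by (rule range_AB[THEN conjunct2, rule_format])

lemma blk_uniq': fixes S :: nat assumes "f + i*S \<le> v" "v < f + i*S + S" "f + k*S \<le> v" "v < f + k*S + S" shows "i = k"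
  using blk_uniq[of i S "v - f" k] assms by auto

lemma blk_idx: fixes S :: nat assumes "S \<ge> 1" "f \<le> v" "v < f + d * S"
  obtains i where "i < d" "f + i*S \<le> v" "v < f + i*S + S"
proof -
  define n where "n = v - f"
  have n: "n < d * S" using assms unfolding n_def by auto
  have "n div S < d" using n assms(1) by (simp add: div_less_iff_less_mult mult.commute)
  moreover have "f + n div S * S \<le> v" using div_times_less_eq_dividend[of n S] assms unfolding n_def by linarith
  moreover have "n < n div S * S + S"
    using assms(1) by (metis div_mult_mod_eq add_less_cancel_left mod_less_divisor less_le_trans zero_less_one)
  ultimately have "n div S < d" "f + n div S * S \<le> v" "v < f + n div S * S + S"
    using assms unfolding n_def by auto
  then show ?thesis using that by blast
qed

lemma short_AB:
  "(\<forall>f u v w. (u,v)\<in>EA d j f \<longrightarrow> (v,w) \<notin> EA d j f) \<and> (\<forall>f u. (u,f) \<notin> EA d j f) \<and>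
   (\<forall>f u v w. (u,v)\<in>EB d j f \<longrightarrow> (v,w) \<notin> EB d j f) \<and> (\<forall>f w. (f + SZ d j - 1, w) \<notin> EB d j f)"
proof (induction j)
  case 0 then show ?case by simp
next
  case (Suc j)
  let ?S = "SZ d j"
  have S1: "?S \<ge> 1" by (rule SZ_pos)
  have rA: "(u,f) \<notin> EA d (Suc j) f" for u f
  proof
    assume "(u,f) \<in> EA d (Suc j) f"
    then obtain i where "i < d" "(u = f \<and> f = f + (i+1) * ?S) \<or> (u,f) \<in> EB d j (f + 1 + i * ?S)"
      unfolding EA.simps by blast
    then show False using S1 rangeB[of u f d j "f + 1 + i * ?S"] by auto
  qed
  have sA: "(v,w) \<notin> EA d (Suc j) f" if uv: "(u,v) \<in> EA d (Suc j) f" for u v w f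
  proof
    assume vw: "(v,w) \<in> EA d (Suc j) f"
    obtain i where i: "i < d" and ab: "(u = f \<and> v = f + (i+1) * ?S) \<or> (u,v) \<in> EB d j (f + 1 + i * ?S)"
      using uv unfolding EA.simps by blast
    obtain k where k: "k < d" and ab': "(v = f \<and> w = f + (k+1) * ?S) \<or> (v,w) \<in> EB d j (f + 1 + k * ?S)"
      using vw unfolding EA.simps by blast
    have vf: "v \<noteq> f" using uv rA by auto
    then have vwB: "(v,w) \<in> EB d j (f + 1 + k * ?S)" using ab' by auto
    then have vk: "f + 1 + k * ?S \<le> v" "v < f + 1 + k * ?S + ?S" using rangeB[OF vwB] by auto
    from ab show False
    proof
      assume h: "u = f \<and> v = f + (i+1) * ?S"
      then have "f + 1 + i * ?S \<le> v" "v < f + 1 + i * ?S + ?S" using S1 by auto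
      then have "i = k" using blk_uniq'[of "f+1" i ?S v k] vk by auto
      then have veq: "v = f + 1 + k * ?S + ?S - 1" using h S1 by auto
      have "(f + 1 + k * ?S + ?S - 1, w) \<notin> EB d j (f + 1 + k * ?S)" using Suc.IH by blast
      then show False using vwB veq by simp
    next
      assume h: "(u,v) \<in> EB d j (f + 1 + i * ?S)"
      then have "f + 1 + i * ?S \<le> v" "v < f + 1 + i * ?S + ?S" using rangeB[OF h] by auto
      then have "i = k" using blk_uniq'[of "f+1" i ?S v k] vk by auto
      then show False using h vwB Suc.IH by blast
    qed
  qed
  have rB: "(f + SZ d (Suc j) - 1, w) \<notin> EB d (Suc j) f" for w f
  proof
    assume "(f + SZ d (Suc j) - 1, w) \<in> EB d (Suc j) f"
    then obtain i where i: "i < d" "(f + d * ?S = f + i * ?S \<and> w = f + d * ?S) \<or> (f + d * ?S, w) \<in> EA d j (f + i * ?S)"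
      unfolding EB.simps by auto
    have le: "i * ?S + ?S \<le> d * ?S" using blk_le[OF i(1)] .
    show False using i(2)
    proof
      assume "f + d * ?S = f + i * ?S \<and> w = f + d * ?S" then show False using le S1 by auto
    next
      assume "(f + d * ?S, w) \<in> EA d j (f + i * ?S)"
      then show False using rangeA le by fastforce
    qed
  qed
  have sB: "(v,w) \<notin> EB d (Suc j) f" if uv: "(u,v) \<in> EB d (Suc j) f" for u v w f
  proof
    assume vw: "(v,w) \<in> EB d (Suc j) f"
    obtain i where i: "i < d" and ab: "(u = f + i * ?S \<and> v = f + d * ?S) \<or> (u,v) \<in> EA d j (f + i * ?S)"
      using uv unfolding EB.simps by blast
    obtain k where k: "k < d" and ab': "(v = f + k * ?S \<and> w = f + d * ?S) \<or> (v,w) \<in> EA d j (f + k * ?S)"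
      using vw unfolding EB.simps by blast
    have vr: "v \<noteq> f + d * ?S" using vw rB[of f w] by auto
    then have h: "(u,v) \<in> EA d j (f + i * ?S)" using ab by auto
    then have vi: "f + i * ?S < v" "v < f + i * ?S + ?S" using rangeA[OF h] by auto
    from ab' show False
    proof
      assume h2: "v = f + k * ?S \<and> w = f + d * ?S"
      then have "i = k" using blk_uniq'[of f i ?S v k] vi S1 by auto
      then show False using h2 vi by auto
    next
      assume h2: "(v,w) \<in> EA d j (f + k * ?S)"
      then have "f + k * ?S \<le> v" "v < f + k * ?S + ?S" using rangeA[OF h2] by auto
      then have "i = k" using blk_uniq'[of f i ?S v k] vi by auto
      then show False using h h2 Suc.IH by blast
    qed
  qed
  show ?case using rA sA rB sB by blast
qed

lemma nc_AB:
  "(\<forall>f a b c e. (a,b)\<in>EA d j f \<longrightarrow> (c,e)\<in>EA d j f \<longrightarrow> \<not>(a<c \<and> c<b \<and> b<e)) \<and>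
   (\<forall>f a b c e. (a,b)\<in>EB d j f \<longrightarrow> (c,e)\<in>EB d j f \<longrightarrow> \<not>(a<c \<and> c<b \<and> b<e))"
proof (induction j)
  case 0 then show ?case by simp
next
  case (Suc j)
  let ?S = "SZ d j"
  have S1: "?S \<ge> 1" by (rule SZ_pos)
  have A: "\<not>(a<c \<and> c<b \<and> b<e)" if ab0: "(a,b)\<in>EA d (Suc j) f" and ce0: "(c,e)\<in>EA d (Suc j) f" for f a b c e
  proof
    assume o: "a<c \<and> c<b \<and> b<e"
    obtain i where i: "i < d" and ab: "(a = f \<and> b = f + (i+1) * ?S) \<or> (a,b) \<in> EB d j (f + 1 + i * ?S)"
      using ab0 unfolding EA.simps by blast
    obtain k where k: "k < d" and ce: "(c = f \<and> e = f + (k+1) * ?S) \<or> (c,e) \<in> EB d j (f + 1 + k * ?S)"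
      using ce0 unfolding EA.simps by blast
    have af: "f \<le> a" using rangeA[OF ab0] by simp
    then have ceB: "(c,e) \<in> EB d j (f + 1 + k * ?S)" using ce o by auto
    then have ck: "f + 1 + k * ?S \<le> c" "e < f + 1 + k * ?S + ?S" using rangeB[OF ceB] by auto
    from ab show False
    proof
      assume h: "a = f \<and> b = f + (i+1) * ?S"
      then have "f + 1 + i * ?S \<le> b" "b < f + 1 + i * ?S + ?S" using S1 by auto
      moreover have "f + 1 + k * ?S \<le> b" "b < f + 1 + k * ?S + ?S" using ck o by auto
      ultimately have "i = k" using blk_uniq'[of "f+1" i ?S b k] by auto
      then show False using h ck o S1 by auto
    next
      assume h: "(a,b) \<in> EB d j (f + 1 + i * ?S)"
      then have "f + 1 + i * ?S \<le> c" "c < f + 1 + i * ?S + ?S" using rangeB[OF h] o by auto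
      then have "i = k" using blk_uniq'[of "f+1" i ?S c k] ck rangeB[OF ceB] by auto
      then show False using h ceB o Suc.IH by blast
    qed
  qed
  have B: "\<not>(a<c \<and> c<b \<and> b<e)" if ab0: "(a,b)\<in>EB d (Suc j) f" and ce0: "(c,e)\<in>EB d (Suc j) f" for f a b c e
  proof
    assume o: "a<c \<and> c<b \<and> b<e"
    obtain i where i: "i < d" and ab: "(a = f + i * ?S \<and> b = f + d * ?S) \<or> (a,b) \<in> EA d j (f + i * ?S)"
      using ab0 unfolding EB.simps by blast
    obtain k where k: "k < d" and ce: "(c = f + k * ?S \<and> e = f + d * ?S) \<or> (c,e) \<in> EA d j (f + k * ?S)"
      using ce0 unfolding EB.simps by blast
    have "e < f + SZ d (Suc j)" using rangeB[OF ce0] by simp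
    then have "b < f + d * ?S" using o by simp
    then have h: "(a,b) \<in> EA d j (f + i * ?S)" using ab by auto
    then have ai: "f + i * ?S \<le> a" "b < f + i * ?S + ?S" using rangeA[OF h] by auto
    from ce show False
    proof
      assume h2: "c = f + k * ?S \<and> e = f + d * ?S"
      have "f + i * ?S \<le> c" "c < f + i * ?S + ?S" using ai o by auto
      then have "i = k" using blk_uniq'[of f i ?S c k] h2 S1 by auto
      then show False using h2 ai o by auto
    next
      assume h2: "(c,e) \<in> EA d j (f + k * ?S)"
      then have "f + k * ?S \<le> c" "c < f + k * ?S + ?S" using rangeA[OF h2] by auto
      then have "i = k" using blk_uniq'[of f i ?S c k] ai o by auto
      then show False using h h2 o Suc.IH by blast
    qed
  qed
  show ?case using A B by blast
qed

lemma card_AB: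
  "(\<forall>f. finite (EA d j f) \<and> card (EA d j f) = SZ d j - 1) \<and>
   (\<forall>f. finite (EB d j f) \<and> card (EB d j f) = SZ d j - 1)"
proof (induction j)
  case 0 then show ?case by simp
next
  case (Suc j)
  let ?S = "SZ d j"
  have S1: "?S \<ge> 1" by (rule SZ_pos)
  have A: "finite (EA d (Suc j) f) \<and> card (EA d (Suc j) f) = SZ d (Suc j) - 1" for f
  proof -
    define B where "B i = insert (f, f + (i+1) * ?S) (EB d j (f + 1 + i * ?S))" for i
    have eq: "EA d (Suc j) f = (\<Union>i<d. B i)" unfolding B_def by simp
    have fin: "\<forall>i\<in>{..<d}. finite (B i)" unfolding B_def using Suc.IH by auto
    have cB: "card (B i) = ?S" for i
    proof -
      have "(f, f + (i+1) * ?S) \<notin> EB d j (f + 1 + i * ?S)" using rangeB by fastforce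
      then show ?thesis unfolding B_def using Suc.IH S1 by simp
    qed
    have disj: "\<forall>i\<in>{..<d}. \<forall>k\<in>{..<d}. i \<noteq> k \<longrightarrow> B i \<inter> B k = {}"
    proof (intro ballI impI)
      fix i k assume ik: "i \<in> {..<d}" "k \<in> {..<d}" "i \<noteq> k"
      show "B i \<inter> B k = {}"
      proof (rule ccontr)
        assume "B i \<inter> B k \<noteq> {}"
        then obtain a b where ab: "(a,b) \<in> B i" "(a,b) \<in> B k" by auto
        show False
        proof (cases "a = f")
          case True
          then have "b = f + (i+1) * ?S" "b = f + (k+1) * ?S" using ab rangeB[of a b d j] unfolding B_def by fastforce+
          then show False using ik S1 by simp
        next
          case False
          then have h: "(a,b) \<in> EB d j (f + 1 + i * ?S)" "(a,b) \<in> EB d j (f + 1 + k * ?S)" using ab unfolding B_def by auto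
          then show False using rangeB[OF h(1)] rangeB[OF h(2)] blk_uniq'[of "f+1" i ?S a k] ik by auto
        qed
      qed
    qed
    have "card (\<Union>i<d. B i) = (\<Sum>i<d. card (B i))" by (rule card_UN_disjoint) (use fin disj in auto)
    also have "\<dots> = d * ?S" using cB by simp
    finally show ?thesis using eq fin by simp
  qed
  have B: "finite (EB d (Suc j) f) \<and> card (EB d (Suc j) f) = SZ d (Suc j) - 1" for f
  proof -
    define B where "B i = insert (f + i * ?S, f + d * ?S) (EA d j (f + i * ?S))" for i
    have eq: "EB d (Suc j) f = (\<Union>i<d. B i)" unfolding B_def by simp
    have fin: "\<forall>i\<in>{..<d}. finite (B i)" unfolding B_def using Suc.IH by auto
    have cB: "card (B i) = ?S" if "i < d" for i
    proof -
      have "(f + i * ?S, f + d * ?S) \<notin> EA d j (f + i * ?S)" using rangeA blk_le[OF that, of ?S] by fastforce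
      then show ?thesis unfolding B_def using Suc.IH S1 by simp
    qed
    have disj: "\<forall>i\<in>{..<d}. \<forall>k\<in>{..<d}. i \<noteq> k \<longrightarrow> B i \<inter> B k = {}"
    proof (intro ballI impI)
      fix i k assume ik: "i \<in> {..<d}" "k \<in> {..<d}" "i \<noteq> k"
      show "B i \<inter> B k = {}"
      proof (rule ccontr)
        assume "B i \<inter> B k \<noteq> {}"
        then obtain a b where ab: "(a,b) \<in> B i" "(a,b) \<in> B k" by auto
        have bi: "f + i * ?S \<le> a" "a < f + i * ?S + ?S"
          using ab(1) rangeA[of a b d j "f + i * ?S"] S1 unfolding B_def by auto
        have bk: "f + k * ?S \<le> a" "a < f + k * ?S + ?S"
          using ab(2) rangeA[of a b d j "f + k * ?S"] S1 unfolding B_def by auto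
        show False using blk_uniq'[OF bi bk] ik by simp
      qed
    qed
    have "card (\<Union>i<d. B i) = (\<Sum>i<d. card (B i))" by (rule card_UN_disjoint) (use fin disj in auto)
    also have "\<dots> = d * ?S" using cB by simp
    finally show ?thesis using eq fin by simp
  qed
  show ?case using A B by blast
qed

lemma conn_AB:
  "(\<forall>f v. f \<le> v \<and> v < f + SZ d j \<longrightarrow> (v, f) \<in> (EA d j f \<union> (EA d j f)\<inverse>)\<^sup>*) \<and>
   (\<forall>f v. f \<le> v \<and> v < f + SZ d j \<longrightarrow> (v, f + SZ d j - 1) \<in> (EB d j f \<union> (EB d j f)\<inverse>)\<^sup>*)"
proof (induction j)
  case 0 then show ?case by simp
next
  case (Suc j)
  let ?S = "SZ d j"
  have S1: "?S \<ge> 1" by (rule SZ_pos)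
  have A: "(v, f) \<in> (EA d (Suc j) f \<union> (EA d (Suc j) f)\<inverse>)\<^sup>*" if v: "f \<le> v" "v < f + SZ d (Suc j)" for f v
  proof (cases "v = f")
    case True then show ?thesis by simp
  next
    case False
    then obtain i where i: "i < d" "f + 1 + i * ?S \<le> v" "v < f + 1 + i * ?S + ?S"
      using blk_idx[OF S1, of "f+1" v d] v by auto
    have sub: "EB d j (f + 1 + i * ?S) \<subseteq> EA d (Suc j) f" using i(1) by auto
    have "(v, f + 1 + i * ?S + ?S - 1) \<in> (EB d j (f + 1 + i * ?S) \<union> (EB d j (f + 1 + i * ?S))\<inverse>)\<^sup>*"
      using Suc.IH i by blast
    then have 1: "(v, f + 1 + i * ?S + ?S - 1) \<in> (EA d (Suc j) f \<union> (EA d (Suc j) f)\<inverse>)\<^sup>*"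
      by (rule rtrancl_mono[THEN subsetD, rotated]) (use sub in auto)
    have "(f, f + (i+1) * ?S) \<in> EA d (Suc j) f" using i(1) by auto
    moreover have "f + (i+1) * ?S = f + 1 + i * ?S + ?S - 1" using S1 by simp
    ultimately have e: "(f, f + 1 + i * ?S + ?S - 1) \<in> EA d (Suc j) f" by (simp only:)
    have 2: "(f + 1 + i * ?S + ?S - 1, f) \<in> (EA d (Suc j) f \<union> (EA d (Suc j) f)\<inverse>)" using e by blast
    show ?thesis using rtrancl_into_rtrancl[OF 1 2] .
  qed
  have B: "(v, f + SZ d (Suc j) - 1) \<in> (EB d (Suc j) f \<union> (EB d (Suc j) f)\<inverse>)\<^sup>*" if v: "f \<le> v" "v < f + SZ d (Suc j)" for f v
  proof (cases "v = f + d * ?S")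
    case True then show ?thesis by simp
  next
    case False
    then obtain i where i: "i < d" "f + i * ?S \<le> v" "v < f + i * ?S + ?S"
      using blk_idx[OF S1, of f v d] v by auto
    have sub: "EA d j (f + i * ?S) \<subseteq> EB d (Suc j) f" using i(1) by auto
    have "(v, f + i * ?S) \<in> (EA d j (f + i * ?S) \<union> (EA d j (f + i * ?S))\<inverse>)\<^sup>*"
      using Suc.IH i by blast
    then have 1: "(v, f + i * ?S) \<in> (EB d (Suc j) f \<union> (EB d (Suc j) f)\<inverse>)\<^sup>*"
      by (rule rtrancl_mono[THEN subsetD, rotated]) (use sub in auto)
    have "(f + i * ?S, f + d * ?S) \<in> EB d (Suc j) f" using i(1) by auto
    then have 2: "(f + i * ?S, f + SZ d (Suc j) - 1) \<in> (EB d (Suc j) f \<union> (EB d (Suc j) f)\<inverse>)" by auto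
    show ?thesis using rtrancl_into_rtrancl[OF 1 2] .
  qed
  show ?case using A B by blast
qed

lemma gd_AB:
  "(\<forall>f q. (q < f \<or> f + SZ d j \<le> q) \<longrightarrow> gd d (EA d j f) j f q) \<and>
   (\<forall>f q. (q < f \<or> f + SZ d j \<le> q) \<longrightarrow> gd d (EB d j f) j (f + SZ d j - 1) q)"
proof (induction j)
  case 0 then show ?case by simp
next
  case (Suc j)
  let ?S = "SZ d j"
  have S1: "?S \<ge> 1" by (rule SZ_pos)
  have A: "gd d (EA d (Suc j) f) (Suc j) f q" if q: "q < f \<or> f + SZ d (Suc j) \<le> q" for f q
  proof -
    define C where "C = (\<lambda>i. f + (i+1) * ?S) ` {..<d}"
    have inj: "inj_on (\<lambda>i. f + (i+1) * ?S) {..<d}" using S1 by (auto simp: inj_on_def)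
    have cC: "card C = d" unfolding C_def using card_image[OF inj] by simp
    have sub: "C \<subseteq> Nbr (EA d (Suc j) f) f - {q}"
    proof
      fix c assume "c \<in> C"
      then obtain i where i: "i < d" "c = f + (i+1) * ?S" unfolding C_def by auto
      have "(f, c) \<in> EA d (Suc j) f" using i by auto
      moreover have "c < f + SZ d (Suc j)" using blk_le[OF i(1), of ?S] i by simp
      ultimately show "c \<in> Nbr (EA d (Suc j) f) f - {q}" using q i unfolding Nbr_def by auto
    qed
    have ch: "gd d (EA d (Suc j) f) j c f" if "c \<in> C" for c
    proof -
      obtain i where i: "i < d" "c = f + (i+1) * ?S" using \<open>c \<in> C\<close> unfolding C_def by auto
      have "f < f + 1 + i * ?S" by simp
      then have "gd d (EB d j (f + 1 + i * ?S)) j (f + 1 + i * ?S + ?S - 1) f" using Suc.IH by blast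
      moreover have "f + 1 + i * ?S + ?S - 1 = c" using i S1 by simp
      ultimately have "gd d (EB d j (f + 1 + i * ?S)) j c f" by simp
      moreover have "EB d j (f + 1 + i * ?S) \<subseteq> EA d (Suc j) f" using i by auto
      ultimately show ?thesis using gd_mono[of "EB d j (f + 1 + i * ?S)" "EA d (Suc j) f" d j c f] by blast
    qed
    have fC: "finite C" unfolding C_def by simp
    show ?thesis unfolding gd.simps
      by (rule exI[where x=C]) (use sub cC ch fC in simp)
  qed
  have B: "gd d (EB d (Suc j) f) (Suc j) (f + SZ d (Suc j) - 1) q" if q: "q < f \<or> f + SZ d (Suc j) \<le> q" for f q
  proof -
    define C where "C = (\<lambda>i. f + i * ?S) ` {..<d}"
    have inj: "inj_on (\<lambda>i. f + i * ?S) {..<d}" using S1 by (auto simp: inj_on_def)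
    have cC: "card C = d" unfolding C_def using card_image[OF inj] by simp
    have sub: "C \<subseteq> Nbr (EB d (Suc j) f) (f + SZ d (Suc j) - 1) - {q}"
    proof
      fix c assume "c \<in> C"
      then obtain i where i: "i < d" "c = f + i * ?S" unfolding C_def by auto
      have "(c, f + d * ?S) \<in> EB d (Suc j) f" using i by auto
      moreover have "c < f + SZ d (Suc j)" using blk_le[OF i(1), of ?S] i by simp
      ultimately show "c \<in> Nbr (EB d (Suc j) f) (f + SZ d (Suc j) - 1) - {q}" using q i unfolding Nbr_def by auto
    qed
    have ch: "gd d (EB d (Suc j) f) j c (f + SZ d (Suc j) - 1)" if "c \<in> C" for c
    proof -
      obtain i where i: "i < d" "c = f + i * ?S" using \<open>c \<in> C\<close> unfolding C_def by auto
      have "f + i * ?S + ?S \<le> f + SZ d (Suc j) - 1" using blk_le[OF i(1), of ?S] by simp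
      then have "gd d (EA d j (f + i * ?S)) j (f + i * ?S) (f + SZ d (Suc j) - 1)" using Suc.IH by blast
      moreover have "EA d j (f + i * ?S) \<subseteq> EB d (Suc j) f" using i by auto
      ultimately show ?thesis using gd_mono[of "EA d j (f + i * ?S)" "EB d (Suc j) f" d j "f + i * ?S" "f + SZ d (Suc j) - 1"] i by blast
    qed
    have fC: "finite C" unfolding C_def by simp
    show ?thesis unfolding gd.simps
      by (rule exI[where x=C]) (use sub cC ch fC in simp)
  qed
  show ?case using A B by blast
qed

lemma seg_pt:
  fixes a b :: real
  assumes "p \<in> closed_segment (a^2, a) (b^2, b)" "a \<le> b"
  shows "a \<le> snd p" "snd p \<le> b" "fst p = (snd p)^2 - (snd p - a) * (snd p - b)"
proof -
  obtain u where u: "0 \<le> u" "u \<le> 1" "p = (1 - u) *\<^sub>R (a^2, a) + u *\<^sub>R (b^2, b)"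
    using assms(1) unfolding closed_segment_def by auto
  have sp: "snd p = (1-u)*a + u*b" and fp: "fst p = (1-u)*a^2 + u*b^2" using u(3) by auto
  have "u*a \<le> u*b" using u assms(2) by (intro mult_left_mono) auto
  then show "a \<le> snd p" using sp by (simp add: algebra_simps)
  have "(1-u)*a \<le> (1-u)*b" using u assms(2) by (intro mult_left_mono) auto
  then show "snd p \<le> b" using sp by (simp add: algebra_simps)
  show "fst p = (snd p)^2 - (snd p - a) * (snd p - b)" unfolding sp fp by (simp add: algebra_simps power2_eq_square)
qed

lemma chord_int:
  fixes a b c e Y :: real
  assumes "a < b" "c < e" "a \<le> Y" "Y \<le> b" "c \<le> Y" "Y \<le> e"
    "(Y - a) * (Y - b) = (Y - c) * (Y - e)" "(a,b) \<noteq> (c,e)"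
    "\<not> (a < c \<and> c < b \<and> b < e)" "\<not> (c < a \<and> a < e \<and> e < b)"
  shows "(Y = a \<or> Y = b) \<and> (Y = c \<or> Y = e)"
proof -
  have key: "(Y - a) * (b - Y) = (Y - c) * (e - Y)" using assms(7) by (simp add: algebra_simps)
  consider "b \<le> c" | "e \<le> a" | "a \<le> c" "e \<le> b" | "c \<le> a" "b \<le> e"
    using assms by linarith
  then show ?thesis
  proof cases
    case 1 then show ?thesis using assms by auto
  next
    case 2 then show ?thesis using assms by auto
  next
    case 3
    have d1: "(Y - a) * (b - Y) - (Y - c) * (e - Y) = (c - a) * (b - Y) + (Y - c) * (b - e)"
      by (simp add: algebra_simps)
    have p1: "(c - a) * (b - Y) \<ge> 0" "(Y - c) * (b - e) \<ge> 0" using 3 assms by auto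
    have z: "(c - a) * (b - Y) = 0" "(Y - c) * (b - e) = 0" using d1 key p1 by linarith+
    show ?thesis
    proof (cases "a = c")
      case True
      then have "b \<noteq> e" using assms(8) by auto
      then have "Y = c" using z(2) by auto
      then show ?thesis using True by auto
    next
      case False
      then have "Y = b" using z(1) by auto
      then show ?thesis using 3 assms by auto
    qed
  next
    case 4
    have d1: "(Y - c) * (e - Y) - (Y - a) * (b - Y) = (a - c) * (e - Y) + (Y - a) * (e - b)"
      by (simp add: algebra_simps)
    have p1: "(a - c) * (e - Y) \<ge> 0" "(Y - a) * (e - b) \<ge> 0" using 4 assms by auto
    have z: "(a - c) * (e - Y) = 0" "(Y - a) * (e - b) = 0" using d1 key p1 by linarith+
    show ?thesis
    proof (cases "a = c")
      case True
      then have "b \<noteq> e" using assms(8) by auto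
      then have "Y = a" using z(2) by auto
      then show ?thesis using True by auto
    next
      case False
      then have "Y = e" using z(1) by auto
      then show ?thesis using 4 assms by auto
    qed
  qed
qed

lemma vpt_par: "vpt (\<lambda>v::nat. (real v)^2) (\<lambda>v. int v) v = ((real v)^2, real v)"
  unfolding vpt_def by simp

lemma seg_vpt:
  fixes a b :: nat
  assumes "p \<in> path_image (linepath (vpt (\<lambda>v::nat. (real v)^2) (\<lambda>v. int v) a) (vpt (\<lambda>v::nat. (real v)^2) (\<lambda>v. int v) b))" "a < b"
  shows "real a \<le> snd p" "snd p \<le> real b" "fst p = (snd p)^2 - (snd p - real a) * (snd p - real b)"
  using seg_pt[of p "real a" "real b"] assms unfolding vpt_par path_image_linepath by auto

lemma parabola_drawing:
  fixes E :: "(nat \<times> nat) set"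
  assumes lt: "\<forall>(a,b)\<in>E. a < b" and nc: "\<forall>a b c e. (a,b)\<in>E \<longrightarrow> (c,e)\<in>E \<longrightarrow> \<not>(a<c \<and> c<b \<and> b<e)"
  shows "upward_planar_layered_drawing V E (\<lambda>v::nat. (real v)^2) (\<lambda>v. int v)
           (\<lambda>e. linepath (vpt (\<lambda>v::nat. (real v)^2) (\<lambda>v. int v) (fst e)) (vpt (\<lambda>v::nat. (real v)^2) (\<lambda>v. int v) (snd e)))"
  (is "upward_planar_layered_drawing V E ?x ?y ?c")
proof -
  have inj: "inj_on (vpt ?x ?y) V" unfolding vpt_par by (auto simp: inj_on_def)
  have edge: "path (?c (u,v)) \<and> pathstart (?c (u,v)) = vpt ?x ?y u \<and>
                 pathfinish (?c (u,v)) = vpt ?x ?y v \<and>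
                 strict_mono_on {0..1} (\<lambda>t. snd (?c (u,v) t)) \<and>
                 path_image (?c (u,v)) \<inter> vpt ?x ?y ` V \<subseteq> {vpt ?x ?y u, vpt ?x ?y v}" if uv: "(u,v) \<in> E" for u v
  proof (intro conjI)
    have ul: "u < v" using lt uv by auto
    show "path (?c (u,v))" by simp
    show "pathstart (?c (u,v)) = vpt ?x ?y u" "pathfinish (?c (u,v)) = vpt ?x ?y v" by simp_all
    show "strict_mono_on {0..1} (\<lambda>t. snd (?c (u,v) t))"
    proof (rule strict_mono_onI)
      fix r s :: real assume "r \<in> {0..1}" "s \<in> {0..1}" "r < s"
      have "real u * (s - r) < real v * (s - r)" using ul \<open>r < s\<close> by (intro mult_strict_right_mono) auto
      then show "snd (?c (u,v) r) < snd (?c (u,v) s)"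
        unfolding vpt_par linepath_def by (simp add: algebra_simps)
    qed
    show "path_image (?c (u,v)) \<inter> vpt ?x ?y ` V \<subseteq> {vpt ?x ?y u, vpt ?x ?y v}"
    proof
      fix p assume p: "p \<in> path_image (?c (u,v)) \<inter> vpt ?x ?y ` V"
      then obtain w where w: "p = ((real w)^2, real w)" unfolding vpt_par by auto
      have "fst p = (snd p)^2 - (snd p - real u) * (snd p - real v)"
        using seg_vpt(3)[of p u v] p ul by auto
      then have "(real w - real u) * (real w - real v) = 0" using w by simp
      then have "w = u \<or> w = v" by auto
      then show "p \<in> {vpt ?x ?y u, vpt ?x ?y v}" using w unfolding vpt_par by auto
    qed
  qed
  have cross: "path_image (?c e) \<inter> path_image (?c e') \<subseteq> vpt ?x ?y ` ({fst e, snd e} \<inter> {fst e', snd e'})"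
    if e: "e \<in> E" "e' \<in> E" "e \<noteq> e'" for e e'
  proof
    fix p assume p: "p \<in> path_image (?c e) \<inter> path_image (?c e')"
    obtain a b where ab: "e = (a,b)" by (cases e)
    obtain c d where cd: "e' = (c,d)" by (cases e')
    have lab: "a < b" "c < d" using lt e ab cd by auto
    have s1: "real a \<le> snd p" "snd p \<le> real b" "fst p = (snd p)^2 - (snd p - real a) * (snd p - real b)"
      using seg_vpt[of p a b] p ab lab by auto
    have s2: "real c \<le> snd p" "snd p \<le> real d" "fst p = (snd p)^2 - (snd p - real c) * (snd p - real d)"
      using seg_vpt[of p c d] p cd lab by auto
    have "(snd p = real a \<or> snd p = real b) \<and> (snd p = real c \<or> snd p = real d)"
    proof (rule chord_int)
      show "real a < real b" "real c < real d" using lab by auto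
      show "real a \<le> snd p" "snd p \<le> real b" "real c \<le> snd p" "snd p \<le> real d" using s1 s2 by auto
      show "(snd p - real a) * (snd p - real b) = (snd p - real c) * (snd p - real d)" using s1 s2 by linarith
      show "(real a, real b) \<noteq> (real c, real d)" using e ab cd by auto
      show "\<not> (real a < real c \<and> real c < real b \<and> real b < real d)" using nc e ab cd by auto
      show "\<not> (real c < real a \<and> real a < real d \<and> real d < real b)" using nc e ab cd by auto
    qed
    then obtain w where w: "w \<in> {a,b} \<inter> {c,d}" "snd p = real w" by auto
    then have "fst p = (real w)^2" using s1 by auto
    then have "p = vpt ?x ?y w" using w unfolding vpt_par by (metis prod.collapse)
    then show "p \<in> vpt ?x ?y ` ({fst e, snd e} \<inter> {fst e', snd e'})" using w ab cd by auto
  qed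
  show ?thesis unfolding upward_planar_layered_drawing_def
    using inj edge cross by auto
qed

lemma log_bound:
  fixes s d n :: nat
  assumes s4: "s \<ge> 4" and dd: "d = 2 * s + 1" and lo: "d^(s+1) \<le> n" and hi: "n \<le> d^(s+2)"
  shows "log 2 (real n) / (2 * log 2 (log 2 (real n))) < real s + 1"
proof -
  have d2: "real d \<ge> 2" using dd s4 by simp
  have dpos: "real d > 0" using d2 by simp
  have "d^(s+1) > 0" using dd by simp
  then have "n > 0" using lo by (rule less_le_trans)
  then have npos: "real n > 0" by simp
  define L where "L = log 2 (real s + 1)"
  have L2: "L > 2"
  proof -
    have "log 2 (real s + 1) > log 2 4" using s4 by (subst log_less_cancel_iff) auto
    moreover have "log 2 (4::real) = 2" using log_nat_power[of "2::real" 2 2] by simp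
    ultimately show ?thesis unfolding L_def by simp
  qed
  define A where "A = log 2 (real n)"
  have A1: "A \<le> real (s+2) * log 2 (real d)"
  proof -
    have hr: "real n \<le> real (d^(s+2))" using hi by (simp only: of_nat_le_iff)
    have "A \<le> log 2 (real (d^(s+2)))" unfolding A_def using hr npos by (intro log_mono) auto
    also have "\<dots> = log 2 (real d ^ (s+2))" by (simp only: of_nat_power)
    also have "\<dots> = real (s+2) * log 2 (real d)" by (rule log_nat_power) simp
    finally show ?thesis .
  qed
  have logd1: "log 2 (real d) \<ge> 1" using d2 by (simp add: le_log_iff)
  have logdL: "log 2 (real d) \<le> 1 + L"
  proof -
    have "log 2 (real d) \<le> log 2 (2 * (real s + 1))" using dd dpos by (intro log_mono) auto
    also have "\<dots> = log 2 2 + L" unfolding L_def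
      by (subst log_mult) (auto simp del: of_nat_add)
    also have "\<dots> = 1 + L" by simp
    finally show ?thesis .
  qed
  have A2: "A \<ge> real (s+1)"
  proof -
    have "real (s+1) * 1 \<le> real (s+1) * log 2 (real d)" using logd1 by (intro mult_left_mono) auto
    also have "\<dots> = log 2 (real d ^ (s+1))" by (rule log_nat_power[symmetric]) simp
    also have "\<dots> = log 2 (real (d^(s+1)))" by (simp only: of_nat_power)
    also have "\<dots> \<le> A"
    proof -
      have lr: "real (d^(s+1)) \<le> real n" using lo by (simp only: of_nat_le_iff)
      have "real (d^(s+1)) > 0" using dpos by simp
      then show ?thesis unfolding A_def using lr by (intro log_mono) auto
    qed
    finally show ?thesis by simp
  qed
  have B: "log 2 A \<ge> L" unfolding L_def using A2 by (intro log_mono) auto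
  have Bpos: "log 2 A > 0" using B L2 by simp
  have "A / (2 * log 2 A) \<le> (real (s+2) * (1 + L)) / (2 * L)"
  proof -
    have "real (s+2) * log 2 (real d) \<le> real (s+2) * (1 + L)" using logdL by (intro mult_left_mono) auto
    then have "A \<le> real (s+2) * (1 + L)" using A1 by linarith
    moreover have "2 * L \<le> 2 * log 2 A" using B by simp
    moreover have "0 \<le> A" using A2 by simp
    ultimately show ?thesis using L2 by (intro frac_le) auto
  qed
  also have "\<dots> < real s + 1"
  proof -
    have "real s * 2 < real s * L" using L2 s4 by (intro mult_strict_left_mono) auto
    moreover have "real (s+2) * (1 + L) = real s + 2 + real s * L + 2 * L" by (simp add: algebra_simps)
    moreover have "(real s + 1) * (2 * L) = 2 * (real s * L) + 2 * L" by (simp add: algebra_simps)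
    moreover have "real s \<ge> 4" using s4 by simp
    ultimately have "real (s+2) * (1 + L) < (real s + 1) * (2 * L)" by linarith
    then show ?thesis using L2 by (simp add: divide_less_eq)
  qed
  finally show ?thesis unfolding A_def .
qed

lemma span_lower:
  assumes dr: "upward_planar_layered_drawing V E x y c" and EV: "E \<subseteq> V \<times> V" and ps: "all_paths_short E"
    and fin: "finite E" and gdp: "gd (2*k+1) E (k+1) p q" and out: "\<forall>c\<in>Nbr E p - {q}. (p,c) \<in> E"
  shows "k + 1 \<le> drawing_span E y"
proof (rule ccontr)
  assume "\<not> ?thesis"
  then have sp: "drawing_span E y \<le> k" by simp
  have g: "goodS V E x y (Xd c)" by (rule drawing_good[OF dr EV ps])
  have b: "y v \<le> y u + int k" if "(u,v) \<in> E" for u v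
  proof -
    have "nat (y v - y u) \<in> insert 0 ((\<lambda>(u,v). nat (y v - y u)) ` E)" using that by force
    then have "nat (y v - y u) \<le> drawing_span E y" unfolding drawing_span_def using fin by (intro Max_ge) auto
    then show ?thesis using sp by linarith
  qed
  have "\<forall>c\<in>Nbr E p - {q}. (p,c) \<in> E \<and> y c \<le> y p + int k" using out b by blast
  then show False using descent[rule_format, of V E x y "Xd c" "2*k+1" "k+1" p q k] g gdp by simp
qed

lemma SZ_lo: "d^j \<le> SZ d j"
proof (induction j)
  case 0 then show ?case by simp
next
  case (Suc j)
  then have h: "d * d^j \<le> d * SZ d j" by (rule mult_le_mono2)
  have "d^(Suc j) = d * d^j" "SZ d (Suc j) = 1 + d * SZ d j" by simp_all
  then show ?case using h by linarith
qed

lemma SZ_hi: "d \<ge> 2 \<Longrightarrow> SZ d j + 1 \<le> d^(j+1)"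
proof (induction j)
  case 0 then show ?case by simp
next
  case (Suc j)
  then have "d * SZ d j + d \<le> d * d^(j+1)" by (metis add_mult_distrib2 mult.right_neutral mult_le_mono2)
  then show ?case using Suc.prems by simp
qed

lemma tree_inst:
  fixes d D :: nat
  defines "V \<equiv> {0..<SZ d D}" and "E \<equiv> EA d D 0"
  shows "directed_tree V E" "all_paths_short E" "card V = SZ d D"
    "\<exists>x y c. upward_planar_layered_drawing V E x y c" "E \<subseteq> V \<times> V" "finite E"
    "gd d E D 0 (SZ d D)" "\<forall>c\<in>Nbr E 0 - {SZ d D}. (0,c) \<in> E"
proof -
  have rng: "\<And>a b. (a,b) \<in> E \<Longrightarrow> a < b \<and> b < SZ d D" unfolding E_def using rangeA[of _ _ d D 0] by force
  show EV: "E \<subseteq> V \<times> V" unfolding V_def using rng by fastforce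
  show fin: "finite E" unfolding E_def using card_AB by blast
  have cE: "card E = SZ d D - 1" unfolding E_def using card_AB by blast
  show cV: "card V = SZ d D" unfolding V_def by simp
  show ps: "all_paths_short E" unfolding all_paths_short_def E_def using short_AB by blast
  have conn: "(v, 0) \<in> (E \<union> E\<inverse>)\<^sup>*" if "v \<in> V" for v
    using conn_AB[of d D] that unfolding V_def E_def by auto
  have sym: "(E \<union> E\<inverse>)\<inverse> = E \<union> E\<inverse>" by auto
  show "directed_tree V E" unfolding directed_tree_def
  proof (intro conjI)
    show "finite V" unfolding V_def by simp
    show "V \<noteq> {}" unfolding V_def using SZ_pos[of d D] by auto
    show "E \<subseteq> V \<times> V" by fact
    show "\<forall>(u, v)\<in>E. u \<noteq> v \<and> (v, u) \<notin> E"
    proof (intro ballI, clarify)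
      fix u v assume "(u,v) \<in> E"
      then have "u < v" using rng by blast
      moreover have "(v,u) \<in> E \<Longrightarrow> v < u" using rng by blast
      ultimately show "u \<noteq> v \<and> (v, u) \<notin> E" by auto
    qed
    show "\<forall>u\<in>V. \<forall>v\<in>V. (u, v) \<in> (E \<union> E\<inverse>)\<^sup>*"
    proof (intro ballI)
      fix u v assume "u \<in> V" "v \<in> V"
      have "(0, v) \<in> ((E \<union> E\<inverse>)\<inverse>)\<^sup>*" using rtrancl_converseI[OF conn[OF \<open>v \<in> V\<close>]] .
      then have "(0, v) \<in> (E \<union> E\<inverse>)\<^sup>*" using sym by simp
      then show "(u, v) \<in> (E \<union> E\<inverse>)\<^sup>*" using conn[OF \<open>u \<in> V\<close>] by (rule rtrancl_trans[rotated])
    qed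
    show "card E = card V - 1" using cE cV by simp
  qed
  show "\<exists>x y c. upward_planar_layered_drawing V E x y c"
  proof (intro exI)
    show "upward_planar_layered_drawing V E (\<lambda>v::nat. (real v)^2) (\<lambda>v. int v)
           (\<lambda>e. linepath (vpt (\<lambda>v::nat. (real v)^2) (\<lambda>v. int v) (fst e)) (vpt (\<lambda>v::nat. (real v)^2) (\<lambda>v. int v) (snd e)))"
    proof (rule parabola_drawing)
      show "\<forall>(a,b)\<in>E. a < b" using rng by auto
      show "\<forall>a b c e. (a,b)\<in>E \<longrightarrow> (c,e)\<in>E \<longrightarrow> \<not>(a<c \<and> c<b \<and> b<e)" unfolding E_def using nc_AB by blast
    qed
  qed
  show "gd d E D 0 (SZ d D)" unfolding E_def using gd_AB[of d D] by simp
  show "\<forall>c\<in>Nbr E 0 - {SZ d D}. (0,c) \<in> E" unfolding Nbr_def E_def using short_AB[of d D] by auto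
qed

lemma member_inst:
  fixes s :: nat assumes s4: "s \<ge> 4"
  defines "d \<equiv> 2 * s + 1"
  defines "n \<equiv> SZ d (s+1)"
  shows "n \<ge> s \<and> n > 0 \<and> (\<exists>(V::nat set) E. directed_tree V E \<and> card V = n \<and> all_paths_short E \<and>
              real (upward_span V E) > log 2 (real n) / (2 * log 2 (log 2 (real n))))"
proof -
  define V where "V = {0..<SZ d (s+1)}"
  define E where "E = EA d (s+1) 0"
  note ti = tree_inst[of d "s+1", folded V_def E_def]
  have lo: "d^(s+1) \<le> n" unfolding n_def by (rule SZ_lo)
  have h2: "2 \<le> d" unfolding d_def using s4 by simp
  have "SZ d (s+1) + 1 \<le> d^(s+1+1)" by (rule SZ_hi[OF h2])
  then have "n + 1 \<le> d^(s+2)" unfolding n_def by (simp only: add.assoc one_add_one)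
  then have hi: "n \<le> d^(s+2)" by linarith
  have "d \<le> d^(s+1)" using power_increasing[of 1 "s+1" d] unfolding d_def by simp
  then have ns: "n \<ge> s" using lo unfolding d_def by linarith
  have npos: "n > 0" using ns s4 by simp
  obtain x0 y0 c0 where dr0: "upward_planar_layered_drawing V E x0 y0 c0" using ti(4) by blast
  define P where "P = (\<lambda>sp. \<exists>x y c. upward_planar_layered_drawing V E x y c \<and> drawing_span E y = sp)"
  have "P (drawing_span E y0)" unfolding P_def using dr0 by blast
  then have "P (Least P)" by (rule LeastI)
  then obtain x y c where dr: "upward_planar_layered_drawing V E x y c" and sp: "drawing_span E y = upward_span V E"
    unfolding P_def upward_span_def by blast
  have gd: "gd (2 * s + 1) E (s + 1) 0 (SZ d (s+1))" using ti(7) unfolding d_def by simp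
  have "s + 1 \<le> drawing_span E y"
    by (rule span_lower[OF dr ti(5) ti(2) ti(6) gd]) (use ti(8) in simp)
  then have us: "real s + 1 \<le> real (upward_span V E)" using sp by simp
  have "log 2 (real n) / (2 * log 2 (log 2 (real n))) < real s + 1"
    by (rule log_bound[OF s4 _ lo hi]) (simp add: d_def)
  then have "real (upward_span V E) > log 2 (real n) / (2 * log 2 (log 2 (real n)))" using us by linarith
  moreover have "directed_tree V E" "card V = n" "all_paths_short E" using ti unfolding n_def by auto
  ultimately show ?thesis using ns npos by blast
qed

theorem mainTheorem4:
  shows "infinite {n::nat. n > 0 \<and>
           (\<exists>(V::nat set) E. directed_tree V E \<and> card V = n \<and> all_paths_short E \<and>
              real (upward_span V E) > log 2 (real n) / (2 * log 2 (log 2 (real n))))}"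
  unfolding infinite_nat_iff_unbounded_le
proof
  fix m :: nat
  define s where "s = max 4 m"
  have "s \<ge> 4" unfolding s_def by simp
  note mi = member_inst[OF this]
  have "SZ (2 * s + 1) (s + 1) \<ge> m" using mi unfolding s_def by linarith
  then show "\<exists>n\<ge>m. n \<in> {n::nat. n > 0 \<and>
           (\<exists>(V::nat set) E. directed_tree V E \<and> card V = n \<and> all_paths_short E \<and>
              real (upward_span V E) > log 2 (real n) / (2 * log 2 (log 2 (real n))))}"
    using mi by blast
qed

end
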